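(* The functional $\Phi$ is continuous on $(\widetilde{\mathcal X},\mathbf D)$.
   Context: Fix $d\ge1$, $\beta>0$, $\phi\ge0$ smooth, spherically symmetric, supported in $B_{1/2}(0)$, $\int\phi=1$, and $V=\phi\star\phi$. Space $\widetilde{\mathcal X}$: $\mathcal M_{\le1}$ = subprobability measures on $\mathbb{R}^d$; orbit $\widetilde\alpha=\{\alpha\star\delta_x:x\in\mathbb{R}^d\}$. $\widetilde{\mathcal X}$ = all empty, finite or countable collections $\xi=\{\widetilde\alpha_i\}_{i\in I}$ of orbits with $\sum_i\alpha_i(\mathbb{R}^d)\le1$. For $k\ge2$, $\mathcal H_k$ = continuous translation-invariant $h:(\mathbb{R}^d)^k\to\mathbb{R}$ with $h\to0$ as $\sup_{i\ne j}|x_i-x_j|\to\infty$; $L(h,\xi)=\sum_{\widetilde\alpha\in\xi}\int h\,\mathrm{d}\alpha^{\otimes k}$; with a countable family $h_r\in\mathcal H_{k_r}$ dense in each $\mathcal H_k$, $\mathbf D(\xi_1,\xi_2)=\sum_r2^{-r}(1+\|h_r\|_\infty)^{-1}|L(h_r,\xi_1)-L(h_r,\xi_2)|$. Define $\Phi(\xi)=\frac{\beta^2}{2}V(0)\Big(1-\frac1{V(0)}\sum_{i\in I}\int_{\mathbb{R}^{2d}}V(x_2-x_1)\alpha_i(\mathrm{d}x_1)\alpha_i(\mathrm{d}x_2)\Big)$ for $\xi=(\widetilde\alpha_i)_{i\in I}$. *)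

theory Defs
  imports "HOL-Analysis.Analysis"
begin

text \<open>C-infinity: f lies in a family of everywhere (Frechet) differentiable functions
  closed under taking partial derivatives in all coordinate directions.\<close>
definition smooth_fun :: "('a::euclidean_space \<Rightarrow> real) \<Rightarrow> bool" where
  "smooth_fun f \<longleftrightarrow> (\<exists>F. f \<in> F \<and> (\<forall>g\<in>F. (\<forall>x. g differentiable (at x)) \<and>
      (\<forall>b\<in>Basis. (\<lambda>x. frechet_derivative g (at x) b) \<in> F)))"

definition admissible_phi :: "('a::euclidean_space \<Rightarrow> real) \<Rightarrow> bool" where
  "admissible_phi \<phi> \<longleftrightarrow> smooth_fun \<phi> \<and> (\<forall>x. \<phi> x \<ge> 0)
     \<and> (\<forall>x y. norm x = norm y \<longrightarrow> \<phi> x = \<phi> y)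
     \<and> (\<forall>x. norm x \<ge> 1/2 \<longrightarrow> \<phi> x = 0)
     \<and> (\<phi> has_integral 1) UNIV"

definition conv_self :: "('a::euclidean_space \<Rightarrow> real) \<Rightarrow> 'a \<Rightarrow> real" where
  "conv_self \<phi> x = integral UNIV (\<lambda>y. \<phi> y * \<phi> (x - y))"

definition subprob_meas :: "'a::euclidean_space measure \<Rightarrow> bool" where
  "subprob_meas \<alpha> \<longleftrightarrow> sets \<alpha> = sets borel \<and> emeasure \<alpha> UNIV \<le> 1"

definition translate_meas :: "'a::euclidean_space measure \<Rightarrow> 'a \<Rightarrow> 'a measure" where
  "translate_meas \<alpha> x = distr \<alpha> borel (\<lambda>y. y + x)"

definition orbit :: "'a::euclidean_space measure \<Rightarrow> 'a measure set" where
  "orbit \<alpha> = {translate_meas \<alpha> x | x. True}"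

definition is_orbit :: "'a::euclidean_space measure set \<Rightarrow> bool" where
  "is_orbit S \<longleftrightarrow> (\<exists>\<alpha>. subprob_meas \<alpha> \<and> S = orbit \<alpha>)"

text \<open>A representative of an orbit (all quantities used are translation invariant).\<close>
definition orb_rep :: "'a measure set \<Rightarrow> 'a measure" where
  "orb_rep S = (SOME \<alpha>. \<alpha> \<in> S)"

text \<open>An element of X-tilde: a countable indexed family of orbits, indexed by I \<subseteq> nat.\<close>
type_synonym 'a Xelem = "nat set \<times> (nat \<Rightarrow> 'a measure set)"

definition Xtilde :: "'a::euclidean_space Xelem set" where
  "Xtilde = {(I, \<xi>). (\<forall>i\<in>I. is_orbit (\<xi> i)) \<and>
              (\<Sum>\<^sub>\<infinity>i\<in>I. emeasure (orb_rep (\<xi> i)) UNIV) \<le> 1}"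

abbreviation cube :: "nat \<Rightarrow> (nat \<Rightarrow> 'a) set" where
  "cube k \<equiv> PiE {..<k} (\<lambda>_. UNIV)"

definition Hk :: "nat \<Rightarrow> ((nat \<Rightarrow> 'a::euclidean_space) \<Rightarrow> real) \<Rightarrow> bool" where
  "Hk k h \<longleftrightarrow> continuous_on (cube k) h
     \<and> (\<forall>x\<in>cube k. \<forall>y. h (\<lambda>i\<in>{..<k}. x i + y) = h x)
     \<and> (\<forall>\<epsilon>>0. \<exists>R. \<forall>x\<in>cube k. (\<exists>i<k. \<exists>j<k. R < dist (x i) (x j)) \<longrightarrow> \<bar>h x\<bar> < \<epsilon>)"

definition supn :: "nat \<Rightarrow> ((nat \<Rightarrow> 'a) \<Rightarrow> real) \<Rightarrow> real" where
  "supn k h = (SUP x\<in>cube k. \<bar>h x\<bar>)"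

definition Lfun :: "nat \<Rightarrow> ((nat \<Rightarrow> 'a::euclidean_space) \<Rightarrow> real) \<Rightarrow> 'a Xelem \<Rightarrow> real" where
  "Lfun k h \<xi> = (\<Sum>\<^sub>\<infinity>i\<in>fst \<xi>. (\<integral>x. h x \<partial>(PiM {..<k} (\<lambda>_. orb_rep (snd \<xi> i)))))"

definition dense_family :: "(nat \<Rightarrow> nat \<times> ((nat \<Rightarrow> 'a::euclidean_space) \<Rightarrow> real)) \<Rightarrow> bool" where
  "dense_family hs \<longleftrightarrow> (\<forall>r. 2 \<le> fst (hs r) \<and> Hk (fst (hs r)) (snd (hs r)))
     \<and> (\<forall>k\<ge>2. \<forall>h. Hk k h \<longrightarrow> (\<forall>\<epsilon>>0. \<exists>r. fst (hs r) = k \<and>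
            supn k (\<lambda>x. h x - snd (hs r) x) < \<epsilon>))"

definition Dmet :: "(nat \<Rightarrow> nat \<times> ((nat \<Rightarrow> 'a::euclidean_space) \<Rightarrow> real)) \<Rightarrow> 'a Xelem \<Rightarrow> 'a Xelem \<Rightarrow> real" where
  "Dmet hs \<xi>1 \<xi>2 = (\<Sum>r. (1/2)^(Suc r) / (1 + supn (fst (hs r)) (snd (hs r)))
        * \<bar>Lfun (fst (hs r)) (snd (hs r)) \<xi>1 - Lfun (fst (hs r)) (snd (hs r)) \<xi>2\<bar>)"

definition Phi :: "real \<Rightarrow> ('a::euclidean_space \<Rightarrow> real) \<Rightarrow> 'a Xelem \<Rightarrow> real" where
  "Phi \<beta> V \<xi> = \<beta>^2 / 2 * V 0 * (1 - 1 / V 0 *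
      (\<Sum>\<^sub>\<infinity>i\<in>fst \<xi>. (\<integral>x2. (\<integral>x1. V (x2 - x1) \<partial>(orb_rep (snd \<xi> i))) \<partial>(orb_rep (snd \<xi> i)))))"

end

theory Submission
  imports Defs
begin

lemma subprob_finite:
  assumes "subprob_meas (\<alpha>::'a::euclidean_space measure)"
  shows "finite_measure \<alpha>" "space \<alpha> = UNIV" "measure \<alpha> UNIV \<le> 1" "emeasure \<alpha> UNIV = ennreal (measure \<alpha> UNIV)"
proof -
  have sp: "space \<alpha> = UNIV" using assms unfolding subprob_meas_def
    by (metis sets_eq_imp_space_eq space_borel)
  then show "space \<alpha> = UNIV" .
  have le: "emeasure \<alpha> UNIV \<le> 1" using assms unfolding subprob_meas_def by auto
  have "emeasure \<alpha> (space \<alpha>) \<noteq> \<infinity>" using le_less_trans[OF le ennreal_one_less_top] sp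
    by simp
  then show fm: "finite_measure \<alpha>"
    by (rule finite_measureI)
  show "emeasure \<alpha> UNIV = ennreal (measure \<alpha> UNIV)"
    using finite_measure.emeasure_eq_measure[OF fm] sp by simp
  then show "measure \<alpha> UNIV \<le> 1" using le
    by simp
qed

lemma cube_nonempty: "(\<lambda>i. undefined) \<in> cube k"
  by (simp add: PiE_iff extensional_def)

lemma PiM_bound:
  fixes \<alpha> :: "'a::euclidean_space measure" and g :: "(nat \<Rightarrow> 'a) \<Rightarrow> real"
  assumes sa: "subprob_meas \<alpha>" and k: "k \<ge> 1"
    and gm: "g \<in> borel_measurable (PiM {..<k} (\<lambda>_. \<alpha>))"
    and gb: "\<forall>x\<in>cube k. \<bar>g x\<bar> \<le> B"
  shows "integrable (PiM {..<k} (\<lambda>_. \<alpha>)) g"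
    "\<bar>\<integral>x. g x \<partial>(PiM {..<k} (\<lambda>_. \<alpha>))\<bar> \<le> B * measure \<alpha> UNIV"
proof -
  note sf = subprob_finite[OF sa]
  interpret fa: finite_measure \<alpha> by (rule sf(1))
  interpret product_sigma_finite "\<lambda>_. \<alpha>"
    unfolding product_sigma_finite_def using fa.sigma_finite_measure_axioms by blast
  let ?P = "PiM {..<k} (\<lambda>_. \<alpha>)"
  have spP: "space ?P = cube k" unfolding space_PiM sf(2) ..
  have "emeasure ?P (space ?P) = (\<Prod>i\<in>{..<k}. emeasure \<alpha> UNIV)"
    unfolding spP by (rule emeasure_PiM) (auto simp: sf(2)[symmetric])
  also have "\<dots> = ennreal (measure \<alpha> UNIV ^ k)"
    unfolding sf(4) by (simp add: prod_ennreal ennreal_power)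
  finally have em: "emeasure ?P (space ?P) = ennreal (measure \<alpha> UNIV ^ k)" .
  interpret fP: finite_measure ?P
    by (rule finite_measureI) (simp add: em)
  have mP: "measure ?P (space ?P) = measure \<alpha> UNIV ^ k"
    using em fP.emeasure_eq_measure by simp
  have B0: "0 \<le> B" using gb cube_nonempty[of k] by fastforce
  show int: "integrable ?P g"
    by (rule fP.integrable_const_bound[where B=B]) (use gb spP gm in auto)
  have "\<bar>\<integral>x. g x \<partial>?P\<bar> \<le> (\<integral>x. \<bar>g x\<bar> \<partial>?P)"
    by (rule integral_abs_bound)
  also have "\<dots> \<le> (\<integral>x. B \<partial>?P)"
    by (rule integral_mono) (use int gb spP in auto)
  also have "\<dots> = B * measure \<alpha> UNIV ^ k" using mP by simp
  also have "\<dots> \<le> B * measure \<alpha> UNIV"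
    by (intro mult_left_mono B0 power_decreasing[of 1 k, simplified]) (use k sf(3) in auto)
  finally show "\<bar>\<integral>x. g x \<partial>?P\<bar> \<le> B * measure \<alpha> UNIV" .
qed

lemma cont_cube_meas:
  fixes \<alpha> :: "'a::euclidean_space measure" and g :: "(nat \<Rightarrow> 'a) \<Rightarrow> real"
  assumes sa: "sets \<alpha> = sets borel" and gc: "continuous_on (cube k) g"
  shows "g \<in> borel_measurable (PiM {..<k} (\<lambda>_. \<alpha>))"
proof -
  let ?P = "PiM {..<k} (\<lambda>_. \<alpha>)"
  have spa: "space \<alpha> = UNIV" using sa by (metis sets_eq_imp_space_eq space_borel)
  have spP: "space ?P = cube k" unfolding space_PiM spa ..
  have comp: "(\<lambda>\<omega>. \<omega> i) \<in> measurable ?P (borel :: 'a measure)" for i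
  proof (cases "i < k")
    case True
    have "(\<lambda>\<omega>. \<omega> i) \<in> measurable ?P \<alpha>"
      by (rule measurable_component_singleton) (use True in auto)
    then show ?thesis using measurable_cong_sets[OF refl sa] by blast
  next
    case False
    have "(\<lambda>\<omega>. undefined) \<in> measurable ?P (borel :: 'a measure)" by simp
    moreover have "\<omega> \<in> space ?P \<Longrightarrow> \<omega> i = undefined" for \<omega>
      using False unfolding spP by (auto simp: PiE_iff extensional_def)
    ultimately show ?thesis using measurable_cong[of ?P "\<lambda>\<omega>. \<omega> i" "\<lambda>\<omega>. undefined"] by auto
  qed
  have eqm: "measurable ?P (PiM UNIV (\<lambda>_. borel :: 'a measure)) = measurable ?P (borel :: (nat \<Rightarrow> 'a) measure)"
    by (rule measurable_cong_sets[OF refl sets_PiM_equal_borel])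
  have "(\<lambda>\<omega> i. \<omega> i) \<in> measurable ?P (PiM UNIV (\<lambda>_. borel :: 'a measure))"
    by (rule measurable_PiM_single') (use comp in auto)
  then have "(\<lambda>\<omega>. \<omega>) \<in> measurable ?P (borel :: (nat \<Rightarrow> 'a) measure)"
    unfolding eqm .
  then have "(\<lambda>\<omega>. \<omega>) \<in> measurable ?P (restrict_space borel (cube k))"
    by (rule measurable_restrict_space2[rotated]) (simp add: spP)
  from measurable_comp[OF this borel_measurable_continuous_on_restrict[OF gc]]
  show ?thesis by (simp add: comp_def)
qed

lemma Hk_bounded:
  fixes h :: "(nat \<Rightarrow> 'a::euclidean_space) \<Rightarrow> real"
  assumes H: "Hk k h" and k: "k \<ge> 1"
  shows "\<exists>B. \<forall>x\<in>cube k. \<bar>h x\<bar> \<le> B"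
proof -
  have hc: "continuous_on (cube k) h"
    and ht: "\<forall>x\<in>cube k. \<forall>y. h (\<lambda>i\<in>{..<k}. x i + y) = h x"
    and hd: "\<forall>\<epsilon>>0. \<exists>R. \<forall>x\<in>cube k. (\<exists>i<k. \<exists>j<k. R < dist (x i) (x j)) \<longrightarrow> \<bar>h x\<bar> < \<epsilon>"
    using H unfolding Hk_def by auto
  obtain R where R: "\<forall>x\<in>cube k. (\<exists>i<k. \<exists>j<k. R < dist (x i) (x j)) \<longrightarrow> \<bar>h x\<bar> < 1"
    using hd by (meson zero_less_one)
  define S where "S = (\<lambda>i::nat. if i < k then cball (0::'a) R else {undefined})"
  define K where "K = PiE UNIV S"
  have "compactin (product_topology (\<lambda>_. euclidean) UNIV) K"
    unfolding K_def compactin_PiE by (auto simp: S_def)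
  then have cK: "compact K" unfolding euclidean_product_topology by simp
  have Ksub: "K \<subseteq> cube k" unfolding K_def S_def
    by (auto simp: PiE_iff extensional_def) (metis singletonD)
  have "compact (h ` K)"
    by (rule compact_continuous_image[OF continuous_on_subset[OF hc Ksub] cK])
  then obtain B0 where B0: "\<forall>y\<in>h ` K. \<bar>y\<bar> \<le> B0"
    using compact_imp_bounded bounded_real by metis
  show ?thesis
  proof (intro exI[of _ "max B0 1"] ballI)
    fix x :: "nat \<Rightarrow> 'a" assume x: "x \<in> cube k"
    show "\<bar>h x\<bar> \<le> max B0 1"
    proof (cases "\<exists>i<k. \<exists>j<k. R < dist (x i) (x j)")
      case True then show ?thesis using R x by force
    next
      case False
      define x' where "x' = (\<lambda>i\<in>{..<k}. x i + - x 0)"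
      have "h x' = h x" unfolding x'_def using ht x by blast
      have "x' i \<in> S i" for i
      proof (cases "i < k")
        case True
        then have "\<not> R < dist (x i) (x 0)" using False k by auto
        then show ?thesis using True by (simp add: S_def x'_def dist_norm norm_minus_commute)
      qed (simp add: S_def x'_def)
      then have "x' \<in> K" by (simp add: K_def PiE_iff)
      moreover note \<open>h x' = h x\<close>
      ultimately show ?thesis using B0 by force
    qed
  qed
qed

lemma phi_props:
  fixes \<phi> :: "'a::euclidean_space \<Rightarrow> real"
  assumes "admissible_phi \<phi>"
  shows "continuous_on UNIV \<phi>" "\<And>x. norm x \<ge> 1/2 \<Longrightarrow> \<phi> x = 0"
proof -
  have sm: "smooth_fun \<phi>" using assms unfolding admissible_phi_def by simp
  then obtain F where F: "\<phi> \<in> F" "\<forall>g\<in>F. (\<forall>x. g differentiable (at x)) \<and>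
      (\<forall>b\<in>Basis. (\<lambda>x. frechet_derivative g (at x) b) \<in> F)"
    unfolding smooth_fun_def by (elim exE conjE)
  have d: "\<phi> differentiable (at x)" for x using F by simp
  show "continuous_on UNIV \<phi>"
    by (intro continuous_at_imp_continuous_on ballI differentiable_imp_continuous_within d)
  have z: "\<forall>x. norm x \<ge> 1/2 \<longrightarrow> \<phi> x = 0"
    using conjunct1[OF conjunct2[OF conjunct2[OF conjunct2[OF assms[unfolded admissible_phi_def]]]]] .
  show "\<And>x. norm x \<ge> 1/2 \<Longrightarrow> \<phi> x = 0" using z by blast
qed

lemma V_cbox:
  fixes \<phi> :: "'a::euclidean_space \<Rightarrow> real"
  assumes "admissible_phi \<phi>"
  shows "\<exists>a. \<forall>x. conv_self \<phi> x = integral (cbox (-a) a) (\<lambda>y. \<phi> y * \<phi> (x - y))"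
proof -
  note P = phi_props[OF assms]
  obtain a :: 'a where a: "cball 0 (1/2) \<subseteq> cbox (-a) a"
    using bounded_subset_cbox_symmetric[OF bounded_cball] by blast
  have "conv_self \<phi> x = integral (cbox (-a) a) (\<lambda>y. \<phi> y * \<phi> (x - y))" for x
  proof -
  have "(\<lambda>y. \<phi> y * \<phi> (x - y)) = (\<lambda>y. if y \<in> cbox (-a) a then \<phi> y * \<phi> (x - y) else 0)"
  proof
    fix y :: 'a
    show "\<phi> y * \<phi> (x - y) = (if y \<in> cbox (-a) a then \<phi> y * \<phi> (x - y) else 0)"
    proof (cases "y \<in> cbox (-a) a")
      case False
      then have "y \<notin> cball 0 (1/2)" using a by blast
      then have "norm y \<ge> 1/2" by simp
      then show ?thesis using P(2) False by simp
    qed simp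
  qed
  then have "integral UNIV (\<lambda>y. \<phi> y * \<phi> (x - y)) = integral UNIV (\<lambda>y. if y \<in> cbox (-a) a then \<phi> y * \<phi> (x - y) else 0)"
    by (rule arg_cong)
  also have "\<dots> = integral (cbox (-a) a) (\<lambda>y. \<phi> y * \<phi> (x - y))"
    by (rule Henstock_Kurzweil_Integration.integral_restrict_UNIV)
  finally show ?thesis unfolding conv_self_def .
  qed
  then show ?thesis by blast
qed

lemma V_cont:
  fixes \<phi> :: "'a::euclidean_space \<Rightarrow> real"
  assumes "admissible_phi \<phi>"
  shows "continuous_on UNIV (conv_self \<phi>)"
proof -
  note P = phi_props[OF assms]
  obtain a where a: "\<forall>x. conv_self \<phi> x = integral (cbox (-a) a) (\<lambda>y. \<phi> y * \<phi> (x - y))"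
    using V_cbox[OF assms] by blast
  have c: "continuous_on (UNIV \<times> cbox (-a) a) (\<lambda>(x, t). \<phi> t * \<phi> (x - t))"
  proof -
    let ?S = "UNIV \<times> cbox (-a) a"
    have c1: "continuous_on ?S (\<lambda>p. \<phi> (snd p))"
      by (rule continuous_on_compose2[OF P(1) continuous_on_snd[OF continuous_on_id]]) auto
    have c2: "continuous_on ?S (\<lambda>p. \<phi> (fst p - snd p))"
      by (rule continuous_on_compose2[OF P(1) continuous_on_diff[OF continuous_on_fst[OF continuous_on_id] continuous_on_snd[OF continuous_on_id]]]) auto
    show ?thesis unfolding case_prod_unfold by (rule continuous_on_mult[OF c1 c2])
  qed
  have "continuous_on UNIV (\<lambda>x. integral (cbox (-a) a) (\<lambda>t. \<phi> t * \<phi> (x - t)))"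
    by (rule integral_continuous_on_param[OF c])
  moreover have "conv_self \<phi> = (\<lambda>x. integral (cbox (-a) a) (\<lambda>t. \<phi> t * \<phi> (x - t)))"
    using a by (intro ext) blast
  ultimately show ?thesis by simp
qed

lemma V_supp:
  fixes \<phi> :: "'a::euclidean_space \<Rightarrow> real"
  assumes "admissible_phi \<phi>" "norm x \<ge> 1"
  shows "conv_self \<phi> x = 0"
proof -
  note P = phi_props[OF assms(1)]
  have "\<phi> y * \<phi> (x - y) = 0" for y
  proof (cases "norm y \<ge> 1/2")
    case True then show ?thesis using P(2) by simp
  next
    case False
    have "norm x \<le> norm y + norm (x - y)" by (metis norm_triangle_sub)
    then have "norm (x - y) \<ge> 1/2" using False assms(2) by linarith
    then show ?thesis using P(2) by simp
  qed
  then have "(\<lambda>y. \<phi> y * \<phi> (x - y)) = (\<lambda>y. 0)" by auto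
  then show ?thesis unfolding conv_self_def by simp
qed

lemma V_bounded:
  fixes \<phi> :: "'a::euclidean_space \<Rightarrow> real"
  assumes "admissible_phi \<phi>"
  shows "\<exists>B. \<forall>x. \<bar>conv_self \<phi> x\<bar> \<le> B"
proof -
  have "compact (conv_self \<phi> ` cball 0 1)"
    by (rule compact_continuous_image[OF continuous_on_subset[OF V_cont[OF assms]]]) auto
  then have "bounded (conv_self \<phi> ` cball 0 1)" by (rule compact_imp_bounded)
  then obtain B where B: "\<forall>y\<in>conv_self \<phi> ` cball 0 1. \<bar>y\<bar> \<le> B"
    unfolding bounded_real by blast
  show ?thesis
  proof (intro exI[of _ "max B 0"] allI)
    fix x :: 'a
    show "\<bar>conv_self \<phi> x\<bar> \<le> max B 0"
    proof (cases "norm x \<ge> 1")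
      case True then show ?thesis using V_supp[OF assms] by simp
    next
      case False
      then have "x \<in> cball 0 1" by simp
      then have "\<bar>conv_self \<phi> x\<bar> \<le> B" using B by blast
      then show ?thesis by simp
    qed
  qed
qed

lemma h0_Hk:
  fixes \<phi> :: "'a::euclidean_space \<Rightarrow> real"
  assumes ad: "admissible_phi \<phi>"
  shows "Hk 2 (\<lambda>x::nat \<Rightarrow> 'a. conv_self \<phi> (x 0 - x 1))"
  unfolding Hk_def
proof (intro conjI)
  have cd: "continuous_on UNIV (\<lambda>x::nat \<Rightarrow> 'a. x 0 - x 1)"
    by (intro continuous_on_diff continuous_on_product_coordinates)
  show "continuous_on (cube 2) (\<lambda>x::nat \<Rightarrow> 'a. conv_self \<phi> (x 0 - x 1))"
    by (rule continuous_on_compose2[OF V_cont[OF ad] continuous_on_subset[OF cd]]) auto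
  show "\<forall>x\<in>cube 2. \<forall>y. conv_self \<phi> ((\<lambda>i\<in>{..<2}. x i + y) 0 - (\<lambda>i\<in>{..<2}. x i + y) 1) =
      conv_self \<phi> (x 0 - x 1)" by simp
  show "\<forall>\<epsilon>>0. \<exists>R. \<forall>x\<in>cube 2. (\<exists>i<2. \<exists>j<2. R < dist (x i) (x j)) \<longrightarrow>
      \<bar>conv_self \<phi> ((x::nat \<Rightarrow> 'a) 0 - x 1)\<bar> < \<epsilon>"
  proof (intro allI impI exI[of _ 1] ballI)
    fix \<epsilon> :: real and x :: "nat \<Rightarrow> 'a"
    assume e: "\<epsilon> > 0" and "\<exists>i<2. \<exists>j<2. 1 < dist (x i) (x j)"
    then obtain i j where ij: "i < 2" "j < 2" "1 < dist (x i) (x j)" by blast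
    have "1 < dist (x 0) (x 1)"
    proof -
      have "i = 0 \<or> i = 1" "j = 0 \<or> j = 1" using ij by auto
      then show ?thesis using ij(3) by (auto simp: dist_commute)
    qed
    then have "norm (x 0 - x 1) \<ge> 1" by (simp add: dist_norm)
    then show "\<bar>conv_self \<phi> (x 0 - x 1)\<bar> < \<epsilon>" using V_supp[OF ad] e by simp
  qed
qed

lemma h0_cont:
  fixes V :: "'a::euclidean_space \<Rightarrow> real"
  assumes "continuous_on UNIV V"
  shows "continuous_on (cube 2) (\<lambda>x::nat \<Rightarrow> 'a. V (x 0 - x 1))"
proof -
  have cd: "continuous_on UNIV (\<lambda>x::nat \<Rightarrow> 'a. x 0 - x 1)"
    by (intro continuous_on_diff continuous_on_product_coordinates)
  show ?thesis
    by (rule continuous_on_compose2[OF assms continuous_on_subset[OF cd]]) auto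
qed

lemma fubini2:
  fixes \<alpha> :: "'a::euclidean_space measure" and V :: "'a \<Rightarrow> real"
  assumes sa: "subprob_meas \<alpha>" and Vc: "continuous_on UNIV V" and Vb: "\<forall>x. \<bar>V x\<bar> \<le> B"
  shows "(\<integral>x. V (x 0 - x 1) \<partial>(PiM {..<2::nat} (\<lambda>_. \<alpha>))) = (\<integral>x2. (\<integral>x1. V (x2 - x1) \<partial>\<alpha>) \<partial>\<alpha>)"
proof -
  note sf = subprob_finite[OF sa]
  interpret fa: finite_measure \<alpha> by (rule sf(1))
  interpret product_sigma_finite "\<lambda>_. \<alpha>"
    unfolding product_sigma_finite_def using fa.sigma_finite_measure_axioms by blast
  have sets: "sets \<alpha> = sets borel" using sa unfolding subprob_meas_def by simp
  have meas: "(\<lambda>x::nat \<Rightarrow> 'a. V (x 0 - x 1)) \<in> borel_measurable (PiM {..<2} (\<lambda>_. \<alpha>))"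
    by (rule cont_cube_meas[OF sets h0_cont[OF Vc]])
  have int: "integrable (PiM {..<2} (\<lambda>_. \<alpha>)) (\<lambda>x::nat \<Rightarrow> 'a. V (x 0 - x 1))"
    by (rule PiM_bound(1)[OF sa _ meas, of B]) (use Vb in auto)
  have ins: "{..<2::nat} = insert 1 {0}" by auto
  have "(\<integral>x. V (x 0 - x 1) \<partial>(PiM {..<2::nat} (\<lambda>_. \<alpha>))) =
      (\<integral>x. (\<integral>y. V ((x(1:=y)) 0 - (x(1:=y)) 1) \<partial>\<alpha>) \<partial>PiM {0::nat} (\<lambda>_. \<alpha>))"
    unfolding ins by (rule product_integral_insert) (use int ins in auto)
  also have "\<dots> = (\<integral>x. (\<lambda>t. \<integral>y. V (t - y) \<partial>\<alpha>) (x 0) \<partial>PiM {0::nat} (\<lambda>_. \<alpha>))"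
    by simp
  also have "\<dots> = (\<integral>t. (\<integral>y. V (t - y) \<partial>\<alpha>) \<partial>\<alpha>)"
  proof (rule product_integral_singleton)
    have "(\<lambda>p::'a \<times> 'a. V (fst p - snd p)) \<in> borel_measurable borel"
      by (intro borel_measurable_continuous_onI continuous_on_compose2[OF Vc]
          continuous_on_diff continuous_on_fst continuous_on_snd continuous_on_id) auto
    then have "(\<lambda>p::'a \<times> 'a. V (fst p - snd p)) \<in> borel_measurable (borel \<Otimes>\<^sub>M borel)"
      unfolding borel_prod .
    then have "(\<lambda>p::'a \<times> 'a. V (fst p - snd p)) \<in> borel_measurable (\<alpha> \<Otimes>\<^sub>M \<alpha>)"
      using measurable_cong_sets[OF sets_pair_measure_cong[OF sets sets] refl] by blast
    then have "case_prod (\<lambda>t y. V (t - y)) \<in> borel_measurable (\<alpha> \<Otimes>\<^sub>M \<alpha>)"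
      by (simp add: case_prod_unfold)
    then show "(\<lambda>t. \<integral>y. V (t - y) \<partial>\<alpha>) \<in> borel_measurable \<alpha>"
      by (rule fa.borel_measurable_lebesgue_integral)
  qed
  finally show ?thesis .
qed

lemma orb_rep_subprob:
  assumes "is_orbit (S :: 'a::euclidean_space measure set)"
  shows "subprob_meas (orb_rep S)"
proof -
  obtain \<alpha> where a: "subprob_meas \<alpha>" "S = orbit \<alpha>" using assms unfolding is_orbit_def by blast
  have "translate_meas \<alpha> 0 \<in> S" unfolding a(2) orbit_def by blast
  then have "orb_rep S \<in> S" unfolding orb_rep_def by (rule someI)
  then obtain x where x: "orb_rep S = translate_meas \<alpha> x" unfolding a(2) orbit_def by blast
  have sets: "sets \<alpha> = sets borel" and le: "emeasure \<alpha> UNIV \<le> 1"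
    using a(1) unfolding subprob_meas_def by auto
  have sp: "space \<alpha> = UNIV" using subprob_finite[OF a(1)] by simp
  have "(\<lambda>y. y + x) \<in> borel_measurable borel" by (intro borel_measurable_continuous_onI continuous_intros)
  then have m: "(\<lambda>y. y + x) \<in> measurable \<alpha> borel"
    using measurable_cong_sets[OF sets refl] by blast
  have "emeasure (distr \<alpha> borel (\<lambda>y. y + x)) UNIV = emeasure \<alpha> ((\<lambda>y. y + x) -` UNIV \<inter> space \<alpha>)"
    by (rule emeasure_distr[OF m]) simp
  also have "\<dots> = emeasure \<alpha> UNIV" using sp by simp
  finally show ?thesis using le unfolding subprob_meas_def x translate_meas_def by simp
qed

lemma Xt_props:
  assumes "\<xi> \<in> (Xtilde :: 'a::euclidean_space Xelem set)"
  shows "\<forall>i\<in>fst \<xi>. subprob_meas (orb_rep (snd \<xi> i))"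
    "(\<lambda>i. measure (orb_rep (snd \<xi> i)) UNIV) summable_on fst \<xi>"
    "infsum (\<lambda>i. measure (orb_rep (snd \<xi> i)) UNIV) (fst \<xi>) \<le> 1"
proof -
  obtain I X where \<xi>: "\<xi> = (I, X)" by (cases \<xi>)
  have orb: "\<forall>i\<in>I. is_orbit (X i)" and tot: "(\<Sum>\<^sub>\<infinity>i\<in>I. emeasure (orb_rep (X i)) UNIV) \<le> 1"
    using assms unfolding \<xi> Xtilde_def by auto
  have sp: "\<forall>i\<in>I. subprob_meas (orb_rep (X i))" using orb orb_rep_subprob by blast
  then show "\<forall>i\<in>fst \<xi>. subprob_meas (orb_rep (snd \<xi> i))" unfolding \<xi> by simp
  let ?m = "\<lambda>i. measure (orb_rep (X i)) UNIV"
  have em: "emeasure (orb_rep (X i)) UNIV = ennreal (?m i)" if "i \<in> I" for i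
    using subprob_finite(4)[of "orb_rep (X i)"] sp that by blast
  have fin: "sum ?m F \<le> 1" if F: "finite F" "F \<subseteq> I" for F
  proof -
    have "ennreal (sum ?m F) = (\<Sum>i\<in>F. ennreal (?m i))"
      by (rule sum_ennreal[symmetric]) simp
    also have "\<dots> = (\<Sum>i\<in>F. emeasure (orb_rep (X i)) UNIV)"
      using em F by (intro sum.cong) auto
    also have "\<dots> \<le> (SUP G\<in>{G. finite G \<and> G \<subseteq> I}. (\<Sum>i\<in>G. emeasure (orb_rep (X i)) UNIV))"
      by (rule SUP_upper) (use F in auto)
    also have "\<dots> = (\<Sum>\<^sub>\<infinity>i\<in>I. emeasure (orb_rep (X i)) UNIV)"
      by (rule nonneg_infsum_complete[symmetric]) simp
    also have "\<dots> \<le> 1" by (rule tot)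
    finally show ?thesis by simp
  qed
  have summ: "?m summable_on I"
    by (rule nonneg_bdd_above_summable_on) (use fin in \<open>auto simp: bdd_above_def\<close>)
  then show "(\<lambda>i. measure (orb_rep (snd \<xi> i)) UNIV) summable_on fst \<xi>" unfolding \<xi> by simp
  have "infsum ?m I \<le> 1" by (rule infsum_le_finite_sums[OF summ]) (use fin in auto)
  then show "infsum (\<lambda>i. measure (orb_rep (snd \<xi> i)) UNIV) (fst \<xi>) \<le> 1" unfolding \<xi> by simp
qed

lemma L_props:
  fixes \<xi> :: "'a::euclidean_space Xelem" and g :: "(nat \<Rightarrow> 'a) \<Rightarrow> real"
  assumes X: "\<xi> \<in> Xtilde" and k: "k \<ge> 1" and gc: "continuous_on (cube k) g"
    and gb: "\<forall>x\<in>cube k. \<bar>g x\<bar> \<le> B"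
  shows "(\<lambda>i. \<integral>x. g x \<partial>(PiM {..<k} (\<lambda>_. orb_rep (snd \<xi> i)))) summable_on fst \<xi>"
    "\<forall>i\<in>fst \<xi>. integrable (PiM {..<k} (\<lambda>_. orb_rep (snd \<xi> i))) g"
    "\<bar>Lfun k g \<xi>\<bar> \<le> B"
proof -
  note XP = Xt_props[OF X]
  let ?m = "\<lambda>i. measure (orb_rep (snd \<xi> i)) UNIV"
  let ?l = "\<lambda>i. \<integral>x. g x \<partial>(PiM {..<k} (\<lambda>_. orb_rep (snd \<xi> i)))"
  have B0: "0 \<le> B" using gb cube_nonempty[of k] by fastforce
  have each: "integrable (PiM {..<k} (\<lambda>_. orb_rep (snd \<xi> i))) g \<and> \<bar>?l i\<bar> \<le> B * ?m i"
    if i: "i \<in> fst \<xi>" for i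
  proof -
    have sa: "subprob_meas (orb_rep (snd \<xi> i))" using XP(1) i by blast
    have sets: "sets (orb_rep (snd \<xi> i)) = sets borel" using sa unfolding subprob_meas_def by simp
    note gm = cont_cube_meas[OF sets gc]
    show ?thesis using PiM_bound[OF sa k gm gb] by blast
  qed
  then show "\<forall>i\<in>fst \<xi>. integrable (PiM {..<k} (\<lambda>_. orb_rep (snd \<xi> i))) g" by blast
  have sBm: "(\<lambda>i. B * ?m i) summable_on fst \<xi>" by (rule summable_on_cmult_right[OF XP(2)])
  have sabs: "(\<lambda>i. \<bar>?l i\<bar>) summable_on fst \<xi>"
    by (rule summable_on_comparison_test[OF sBm]) (use each in auto)
  then have nab: "(\<lambda>i. norm (?l i)) summable_on fst \<xi>" by simp
  then show sl: "?l summable_on fst \<xi>" using summable_on_iff_abs_summable_on_real by blast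
  have "\<bar>Lfun k g \<xi>\<bar> = norm (infsum ?l (fst \<xi>))" unfolding Lfun_def by simp
  also have "\<dots> \<le> infsum (\<lambda>i. norm (?l i)) (fst \<xi>)"
    by (rule norm_infsum_bound) (use nab in simp)
  also have "\<dots> \<le> infsum (\<lambda>i. B * ?m i) (fst \<xi>)"
    by (rule infsum_mono) (use sabs sBm each in auto)
  also have "\<dots> = B * infsum ?m (fst \<xi>)"
    by (rule infsum_cmult_right) (use XP(2) in simp)
  also have "\<dots> \<le> B * 1" by (rule mult_left_mono[OF XP(3) B0])
  finally show "\<bar>Lfun k g \<xi>\<bar> \<le> B" by simp
qed

lemma L_diff:
  fixes \<xi> :: "'a::euclidean_space Xelem" and g1 g2 :: "(nat \<Rightarrow> 'a) \<Rightarrow> real"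
  assumes X: "\<xi> \<in> Xtilde" and k: "k \<ge> 1"
    and g1c: "continuous_on (cube k) g1" and g1b: "\<forall>x\<in>cube k. \<bar>g1 x\<bar> \<le> B1"
    and g2c: "continuous_on (cube k) g2" and g2b: "\<forall>x\<in>cube k. \<bar>g2 x\<bar> \<le> B2"
  shows "Lfun k g1 \<xi> - Lfun k g2 \<xi> = Lfun k (\<lambda>x. g1 x - g2 x) \<xi>"
proof -
  note P1 = L_props[OF X k g1c g1b] and P2 = L_props[OF X k g2c g2b]
  let ?l1 = "\<lambda>i. \<integral>x. g1 x \<partial>(PiM {..<k} (\<lambda>_. orb_rep (snd \<xi> i)))"
  let ?l2 = "\<lambda>i. \<integral>x. g2 x \<partial>(PiM {..<k} (\<lambda>_. orb_rep (snd \<xi> i)))"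
  have s2: "(\<lambda>i. - ?l2 i) summable_on fst \<xi>" by (rule summable_on_uminus[THEN iffD2, OF P2(1)])
  have u: "infsum (\<lambda>i. - ?l2 i) (fst \<xi>) = - infsum ?l2 (fst \<xi>)" by (rule infsum_uminus)
  have "Lfun k g1 \<xi> - Lfun k g2 \<xi> = infsum ?l1 (fst \<xi>) + infsum (\<lambda>i. - ?l2 i) (fst \<xi>)"
    unfolding Lfun_def u by linarith
  also have "\<dots> = infsum (\<lambda>i. ?l1 i + - ?l2 i) (fst \<xi>)"
    by (rule infsum_add[symmetric, OF P1(1) s2])
  also have "\<dots> = Lfun k (\<lambda>x. g1 x - g2 x) \<xi>"
    unfolding Lfun_def
  proof (rule infsum_cong)
    fix i assume i: "i \<in> fst \<xi>"
    have "(\<integral>x. g1 x - g2 x \<partial>(PiM {..<k} (\<lambda>_. orb_rep (snd \<xi> i)))) = ?l1 i - ?l2 i"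
      using Bochner_Integration.integral_diff[OF bspec[OF P1(2) i] bspec[OF P2(2) i]] .
    then show "?l1 i + - ?l2 i = (\<integral>x. g1 x - g2 x \<partial>(PiM {..<k} (\<lambda>_. orb_rep (snd \<xi> i))))"
      by linarith
  qed
  finally show ?thesis .
qed

lemma supn_bound:
  fixes h :: "(nat \<Rightarrow> 'a) \<Rightarrow> real"
  assumes "\<forall>x\<in>cube k. \<bar>h x\<bar> \<le> B"
  shows "\<forall>x\<in>cube k. \<bar>h x\<bar> \<le> supn k h" "0 \<le> supn k h"
proof -
  have bdd: "bdd_above ((\<lambda>x. \<bar>h x\<bar>) ` cube k)"
    using assms unfolding bdd_above_def by blast
  show a: "\<forall>x\<in>cube k. \<bar>h x\<bar> \<le> supn k h"
    unfolding supn_def using cSUP_upper[OF _ bdd] by blast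
  have "\<bar>h (\<lambda>i. undefined)\<bar> \<le> supn k h" using a cube_nonempty[of k] by blast
  then show "0 \<le> supn k h" by linarith
qed

lemma Dmet_term:
  fixes hs :: "nat \<Rightarrow> nat \<times> ((nat \<Rightarrow> 'a::euclidean_space) \<Rightarrow> real)"
  assumes hs: "dense_family hs" and X: "\<xi> \<in> Xtilde" and Y: "\<eta> \<in> Xtilde"
  shows "(1/2)^(Suc r) / (1 + supn (fst (hs r)) (snd (hs r)))
        * \<bar>Lfun (fst (hs r)) (snd (hs r)) \<xi> - Lfun (fst (hs r)) (snd (hs r)) \<eta>\<bar> \<le> Dmet hs \<xi> \<eta>"
proof -
  define t where "t = (\<lambda>r. (1/2)^(Suc r) / (1 + supn (fst (hs r)) (snd (hs r)))
        * \<bar>Lfun (fst (hs r)) (snd (hs r)) \<xi> - Lfun (fst (hs r)) (snd (hs r)) \<eta>\<bar>)"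
  have tb: "0 \<le> t n \<and> t n \<le> (1/2)^n" for n
  proof -
    let ?k = "fst (hs n)" and ?h = "snd (hs n)" and ?s = "supn (fst (hs n)) (snd (hs n))"
    have k2: "2 \<le> ?k" and H: "Hk ?k ?h" using hs unfolding dense_family_def by auto
    have k1: "1 \<le> ?k" using k2 by simp
    obtain B where B: "\<forall>x\<in>cube ?k. \<bar>?h x\<bar> \<le> B" using Hk_bounded[OF H k1] by blast
    note sb = supn_bound[OF B]
    have hc: "continuous_on (cube ?k) ?h" using H unfolding Hk_def by blast
    have l1: "\<bar>Lfun ?k ?h \<xi>\<bar> \<le> ?s" by (rule L_props(3)[OF X k1 hc sb(1)])
    have l2: "\<bar>Lfun ?k ?h \<eta>\<bar> \<le> ?s" by (rule L_props(3)[OF Y k1 hc sb(1)])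
    have d: "\<bar>Lfun ?k ?h \<xi> - Lfun ?k ?h \<eta>\<bar> \<le> 2 * ?s" using l1 l2 by linarith
    have p: "0 < (1/2::real)^(Suc n) / (1 + ?s)" using sb(2) by simp
    have "t n \<le> (1/2)^(Suc n) / (1 + ?s) * (2 * ?s)"
      unfolding t_def by (rule mult_left_mono[OF d]) (use p in simp)
    also have "\<dots> = ((1/2)^(Suc n) * 2) * (?s / (1 + ?s))" by (simp only: divide_inverse mult_ac)
    also have "\<dots> = (1/2)^n * (?s / (1 + ?s))" by simp
    also have "\<dots> \<le> (1/2)^n * 1"
      by (rule mult_left_mono) (use sb(2) in auto)
    finally have "t n \<le> (1/2)^n" by simp
    moreover have "0 \<le> t n" unfolding t_def using p by (intro mult_nonneg_nonneg) auto
    ultimately show ?thesis by simp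
  qed
  have st: "summable t"
    by (rule summable_comparison_test[OF _ summable_geometric[of "1/2::real"]]) (use tb in auto)
  have "sum t {r} \<le> suminf t"
    by (rule sum_le_suminf[OF st]) (use tb in auto)
  then have "t r \<le> Dmet hs \<xi> \<eta>" unfolding Dmet_def t_def[symmetric] by simp
  then show ?thesis unfolding t_def .
qed

lemma Phi_L:
  fixes \<phi> :: "'a::euclidean_space \<Rightarrow> real"
  assumes ad: "admissible_phi \<phi>" and X: "\<xi> \<in> Xtilde"
  shows "Phi \<beta> (conv_self \<phi>) \<xi> = \<beta>^2 / 2 * conv_self \<phi> 0 * (1 - 1 / conv_self \<phi> 0 *
      Lfun 2 (\<lambda>x::nat \<Rightarrow> 'a. conv_self \<phi> (x 0 - x 1)) \<xi>)"
proof -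
  obtain BV where BV: "\<forall>x. \<bar>conv_self \<phi> x\<bar> \<le> BV" using V_bounded[OF ad] by blast
  have "(\<Sum>\<^sub>\<infinity>i\<in>fst \<xi>. (\<integral>x2. (\<integral>x1. conv_self \<phi> (x2 - x1) \<partial>(orb_rep (snd \<xi> i))) \<partial>(orb_rep (snd \<xi> i))))
      = Lfun 2 (\<lambda>x::nat \<Rightarrow> 'a. conv_self \<phi> (x 0 - x 1)) \<xi>"
    unfolding Lfun_def
  proof (rule infsum_cong)
    fix i assume i: "i \<in> fst \<xi>"
    have sa: "subprob_meas (orb_rep (snd \<xi> i))" using Xt_props(1)[OF X] i by blast
    show "(\<integral>x2. (\<integral>x1. conv_self \<phi> (x2 - x1) \<partial>(orb_rep (snd \<xi> i))) \<partial>(orb_rep (snd \<xi> i))) =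
        (\<integral>x. conv_self \<phi> (x 0 - x 1) \<partial>(PiM {..<2::nat} (\<lambda>_. orb_rep (snd \<xi> i))))"
      by (rule fubini2[OF sa V_cont[OF ad] BV, symmetric])
  qed
  then show ?thesis unfolding Phi_def by simp
qed

theorem lemma2p3:
  fixes \<phi> :: "'a::euclidean_space \<Rightarrow> real" and \<beta> :: real
    and hs :: "nat \<Rightarrow> nat \<times> ((nat \<Rightarrow> 'a) \<Rightarrow> real)"
  assumes "\<beta> > 0" and "admissible_phi \<phi>" and "dense_family hs"
  shows "\<forall>\<xi>\<in>Xtilde. \<forall>\<epsilon>>0. \<exists>\<delta>>0. \<forall>\<eta>\<in>Xtilde.
           Dmet hs \<xi> \<eta> < \<delta> \<longrightarrow> \<bar>Phi \<beta> (conv_self \<phi>) \<eta> - Phi \<beta> (conv_self \<phi>) \<xi>\<bar> < \<epsilon>"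
proof (intro ballI allI impI)
  fix \<xi> :: "'a Xelem" and \<epsilon> :: real
  assume X: "\<xi> \<in> Xtilde" and e: "\<epsilon> > 0"
  note ad = assms(2) and hs = assms(3)
  define V where "V = conv_self \<phi>"
  obtain BV where BV: "\<forall>x. \<bar>V x\<bar> \<le> BV" using V_bounded[OF ad] unfolding V_def by blast
  define h0 where "h0 = (\<lambda>x::nat \<Rightarrow> 'a. V (x 0 - x 1))"
  have H0: "Hk 2 h0" unfolding h0_def V_def by (rule h0_Hk[OF ad])
  have h0c: "continuous_on (cube 2) h0" using H0 unfolding Hk_def by blast
  have h0b: "\<forall>x\<in>cube 2. \<bar>h0 x\<bar> \<le> BV" unfolding h0_def using BV by blast
  define K where "K = \<beta>^2 / 2"
  have K0: "K > 0" unfolding K_def using assms(1) by simp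
  define e' where "e' = \<epsilon> / (3 * K + 1)"
  have e'0: "e' > 0" unfolding e'_def using e K0 by simp
  have Ke': "K * (3 * e') < \<epsilon>"
  proof -
    have "K * (3 * e') = \<epsilon> * (3 * K / (3 * K + 1))" unfolding e'_def using K0 by (simp add: field_simps)
    also have "\<dots> < \<epsilon> * 1" by (rule mult_strict_left_mono) (use e K0 in auto)
    finally show ?thesis by simp
  qed
  obtain r where r: "fst (hs r) = 2" "supn 2 (\<lambda>x. h0 x - snd (hs r) x) < e'"
    using hs H0 e'0 unfolding dense_family_def by blast
  define hr where "hr = snd (hs r)"
  have Hr: "Hk 2 hr" using hs r(1) unfolding dense_family_def hr_def by metis
  have hrc: "continuous_on (cube 2) hr" using Hr unfolding Hk_def by blast
  obtain Br where Br: "\<forall>x\<in>cube 2. \<bar>hr x\<bar> \<le> Br" using Hk_bounded[OF Hr] by auto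
  define d where "d = (\<lambda>x. h0 x - hr x)"
  have dc: "continuous_on (cube 2) d" unfolding d_def by (intro continuous_on_diff h0c hrc)
  have db0: "\<forall>x\<in>cube 2. \<bar>d x\<bar> \<le> BV + Br"
  proof
    fix x :: "nat \<Rightarrow> 'a" assume "x \<in> cube 2"
    then have "\<bar>h0 x\<bar> \<le> BV" "\<bar>hr x\<bar> \<le> Br" using h0b Br by auto
    then show "\<bar>d x\<bar> \<le> BV + Br" unfolding d_def by linarith
  qed
  note db = supn_bound(1)[OF db0]
  have sd: "supn 2 d < e'" using r(2) unfolding d_def hr_def .
  define c where "c = (1/2::real)^(Suc r) / (1 + supn 2 hr)"
  have c0: "c > 0" unfolding c_def using supn_bound(2)[OF Br] by simp
  show "\<exists>\<delta>>0. \<forall>\<eta>\<in>Xtilde. Dmet hs \<xi> \<eta> < \<delta> \<longrightarrow>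
      \<bar>Phi \<beta> (conv_self \<phi>) \<eta> - Phi \<beta> (conv_self \<phi>) \<xi>\<bar> < \<epsilon>"
  proof (intro exI[of _ "c * e'"] conjI ballI impI)
    show "c * e' > 0" using c0 e'0 by simp
    fix \<eta> :: "'a Xelem" assume Y: "\<eta> \<in> Xtilde" and D: "Dmet hs \<xi> \<eta> < c * e'"
    have "c * \<bar>Lfun 2 hr \<xi> - Lfun 2 hr \<eta>\<bar> \<le> Dmet hs \<xi> \<eta>"
      using Dmet_term[OF hs X Y, of r] unfolding c_def hr_def r(1) .
    then have "c * \<bar>Lfun 2 hr \<xi> - Lfun 2 hr \<eta>\<bar> < c * e'" using D by linarith
    then have Lr: "\<bar>Lfun 2 hr \<xi> - Lfun 2 hr \<eta>\<bar> < e'" using c0 by simp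
    have Ldx: "\<bar>Lfun 2 d \<xi>\<bar> < e'" using L_props(3)[OF X _ dc db] sd by simp
    have Ldy: "\<bar>Lfun 2 d \<eta>\<bar> < e'" using L_props(3)[OF Y _ dc db] sd by simp
    have ex: "Lfun 2 h0 \<xi> - Lfun 2 hr \<xi> = Lfun 2 d \<xi>"
      unfolding d_def by (rule L_diff[OF X _ h0c h0b hrc Br]) simp
    have ey: "Lfun 2 h0 \<eta> - Lfun 2 hr \<eta> = Lfun 2 d \<eta>"
      unfolding d_def by (rule L_diff[OF Y _ h0c h0b hrc Br]) simp
    have dL: "\<bar>Lfun 2 h0 \<xi> - Lfun 2 h0 \<eta>\<bar> < 3 * e'" using Lr Ldx Ldy ex ey by linarith
    have PX: "Phi \<beta> (conv_self \<phi>) \<xi> = K * V 0 * (1 - 1 / V 0 * Lfun 2 h0 \<xi>)"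
      unfolding K_def V_def h0_def by (rule Phi_L[OF ad X])
    have PY: "Phi \<beta> (conv_self \<phi>) \<eta> = K * V 0 * (1 - 1 / V 0 * Lfun 2 h0 \<eta>)"
      unfolding K_def V_def h0_def by (rule Phi_L[OF ad Y])
    define w where "w = V 0 * (1 / V 0)"
    have w1: "\<bar>w\<bar> \<le> 1" unfolding w_def by (cases "V 0 = 0") auto
    have "Phi \<beta> (conv_self \<phi>) \<eta> - Phi \<beta> (conv_self \<phi>) \<xi> = K * w * (Lfun 2 h0 \<xi> - Lfun 2 h0 \<eta>)"
      unfolding PX PY w_def by (simp add: algebra_simps)
    then have "\<bar>Phi \<beta> (conv_self \<phi>) \<eta> - Phi \<beta> (conv_self \<phi>) \<xi>\<bar> = K * (\<bar>w\<bar> * \<bar>Lfun 2 h0 \<xi> - Lfun 2 h0 \<eta>\<bar>)"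
      using K0 by (simp add: abs_mult)
    also have "\<dots> \<le> K * (1 * (3 * e'))"
      by (intro mult_left_mono mult_mono w1) (use dL K0 in auto)
    also have "\<dots> < \<epsilon>" using Ke' by simp
    finally show "\<bar>Phi \<beta> (conv_self \<phi>) \<eta> - Phi \<beta> (conv_self \<phi>) \<xi>\<bar> < \<epsilon>" .
  qed
qed

end
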